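(* Let $X$ be a convex metric space over a Boolean ring $B$, let $0,0'\in X$, let $\{x_{1},\ldots,x_{n}\}$ be a base of $(X,0)$ and $\{y_{1},\ldots,y_{m}\}$ a base of $(X,0')$. Then $n=m$ and $d(0,x_i)=d(0',y_i)$ for $i=1,\ldots,n$. Moreover, there exists an isometry $f:X\to X$ with $f(0)=0'$ and $f(x_{i})=y_{i}$ for $i=1,\ldots,n$.
   Context: $B$ is a Boolean ring ($a\vee b=a+b+ab$, $a\le b\iff ab=a$; $a_1\oplus\cdots\oplus a_n$ denotes a sum of pairwise disjoint elements). A Boolean metric space over $B$: set $X$ with $d:X\times X\to B$, $d(x,y)=0\iff x=y$, symmetric, $d(x,z)\le d(x,y)\vee d(y,z)$. For $x_1,\dots,x_n\in X$, $a_1,\dots,a_n\in B$ with $a_1\oplus\cdots\oplus a_n=1$, $x$ is a convex combination of the $x_i$ with coefficients $a_i$ if $a_id(x,x_i)=0$ for all $i$; $X$ is convex if all such combinations exist. An isometry is a bijection preserving $d$. In a pointed space $(X,0)$, $|x|=d(0,x)$; $x,y$ are orthogonal if $d(x,y)=|x|\vee|y|$; a finite $R\subseteq X$ is orthogonal if $0\notin R$ and distinct elements are orthogonal; a referential of $(X,0)$ is an orthogonal $R$ such that every element of $X$ is a convex combination of elements of $R\cup\{0\}$; a base of $(X,0)$ is a referential $\{x_1,\dots,x_n\}$ with $|x_1|\ge\cdots\ge|x_n|$. *)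

theory Defs
  imports Main
begin

class boolean_ring = comm_ring_1 +
  assumes mult_idem_br: "x * x = x"

definition bjoin :: "'b::boolean_ring \<Rightarrow> 'b \<Rightarrow> 'b" where
  "bjoin a b = a + b + a * b"

definition ble :: "'b::boolean_ring \<Rightarrow> 'b \<Rightarrow> bool" where
  "ble a b \<longleftrightarrow> a * b = a"

definition boolean_metric :: "'a set \<Rightarrow> ('a \<Rightarrow> 'a \<Rightarrow> 'b::boolean_ring) \<Rightarrow> bool" where
  "boolean_metric X d \<longleftrightarrow>
     (\<forall>x\<in>X. \<forall>y\<in>X. d x y = 0 \<longleftrightarrow> x = y) \<and>
     (\<forall>x\<in>X. \<forall>y\<in>X. d x y = d y x) \<and>
     (\<forall>x\<in>X. \<forall>y\<in>X. \<forall>z\<in>X. ble (d x z) (bjoin (d x y) (d y z)))"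

definition disjoint_sum_one :: "nat \<Rightarrow> (nat \<Rightarrow> 'b::boolean_ring) \<Rightarrow> bool" where
  "disjoint_sum_one n a \<longleftrightarrow>
     (\<forall>i<n. \<forall>j<n. i \<noteq> j \<longrightarrow> a i * a j = 0) \<and> (\<Sum>i<n. a i) = 1"

definition is_conv_comb :: "('a \<Rightarrow> 'a \<Rightarrow> 'b::boolean_ring) \<Rightarrow> 'a \<Rightarrow> nat \<Rightarrow> (nat \<Rightarrow> 'a) \<Rightarrow> (nat \<Rightarrow> 'b) \<Rightarrow> bool" where
  "is_conv_comb d x n xs a \<longleftrightarrow> disjoint_sum_one n a \<and> (\<forall>i<n. a i * d x (xs i) = 0)"

definition convex_bms :: "'a set \<Rightarrow> ('a \<Rightarrow> 'a \<Rightarrow> 'b::boolean_ring) \<Rightarrow> bool" where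
  "convex_bms X d \<longleftrightarrow>
     (\<forall>n xs a. (\<forall>i<n. xs i \<in> X) \<longrightarrow> disjoint_sum_one n a \<longrightarrow>
        (\<exists>x\<in>X. is_conv_comb d x n xs a))"

definition orthogonal :: "('a \<Rightarrow> 'a \<Rightarrow> 'b::boolean_ring) \<Rightarrow> 'a \<Rightarrow> 'a \<Rightarrow> 'a \<Rightarrow> bool" where
  "orthogonal d z x y \<longleftrightarrow> d x y = bjoin (d z x) (d z y)"

definition orthogonal_set :: "('a \<Rightarrow> 'a \<Rightarrow> 'b::boolean_ring) \<Rightarrow> 'a \<Rightarrow> 'a set \<Rightarrow> bool" where
  "orthogonal_set d z R \<longleftrightarrow> finite R \<and> z \<notin> R \<and>
     (\<forall>x\<in>R. \<forall>y\<in>R. x \<noteq> y \<longrightarrow> orthogonal d z x y)"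

definition referential :: "'a set \<Rightarrow> ('a \<Rightarrow> 'a \<Rightarrow> 'b::boolean_ring) \<Rightarrow> 'a \<Rightarrow> 'a set \<Rightarrow> bool" where
  "referential X d z R \<longleftrightarrow> R \<subseteq> X \<and> orthogonal_set d z R \<and>
     (\<forall>x\<in>X. \<exists>n xs a. (\<forall>i<n. xs i \<in> R \<union> {z}) \<and> is_conv_comb d x n xs a)"

text \<open>A base, as an enumeration x_1,...,x_n (a distinct list) with |x_1| \<ge> ... \<ge> |x_n|.\<close>
definition is_base :: "'a set \<Rightarrow> ('a \<Rightarrow> 'a \<Rightarrow> 'b::boolean_ring) \<Rightarrow> 'a \<Rightarrow> 'a list \<Rightarrow> bool" where
  "is_base X d z xs \<longleftrightarrow> distinct xs \<and> referential X d z (set xs) \<and>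
     sorted_wrt (\<lambda>x y. ble (d z y) (d z x)) xs"

definition isometry_on :: "'a set \<Rightarrow> ('a \<Rightarrow> 'a \<Rightarrow> 'b) \<Rightarrow> ('a \<Rightarrow> 'a) \<Rightarrow> bool" where
  "isometry_on X d f \<longleftrightarrow> bij_betw f X X \<and> (\<forall>x\<in>X. \<forall>y\<in>X. d (f x) (f y) = d x y)"

end

theory Submission imports Defs begin

lemma br_add_self[simp]: "(x::'b::boolean_ring) + x = 0"
proof -
  have "x*x+x*x+(x*x+x*x) = x+x" using mult_idem_br[of "x+x"] by (simp only: distrib_left distrib_right)
  hence "x+x+(x+x) = x+x" by (simp only: mult_idem_br)
  thus ?thesis by (metis add_cancel_left_left)
qed

lemma br_neg[simp]: "- (x::'b::boolean_ring) = x"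
  using minus_unique[OF br_add_self] .

lemma br_eq_of_sum0: "(x::'b::boolean_ring) + y = 0 \<Longrightarrow> x = y"
proof -
  assume h: "x + y = 0"
  have "x = x + (y + y)" by simp
  also have "\<dots> = (x + y) + y" by (simp only: add.assoc)
  also have "\<dots> = y" using h by simp
  finally show "x = y" .
qed

lemma br_compl0: "(x::'b::boolean_ring) * (1 + y) = 0 \<Longrightarrow> x = x * y"
  by (rule br_eq_of_sum0) (simp add: distrib_left)

lemma bm_zero: "boolean_metric X d \<Longrightarrow> x \<in> X \<Longrightarrow> y \<in> X \<Longrightarrow> d x y = 0 \<longleftrightarrow> x = y"
  unfolding boolean_metric_def by blast
lemma bm_sym: "boolean_metric X d \<Longrightarrow> x \<in> X \<Longrightarrow> y \<in> X \<Longrightarrow> d x y = d y x"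
  unfolding boolean_metric_def by blast
lemma bm_tri: "boolean_metric X d \<Longrightarrow> x \<in> X \<Longrightarrow> y \<in> X \<Longrightarrow> w \<in> X \<Longrightarrow>
   d x w * (d x y + d y w + d x y * d y w) = d x w"
  unfolding boolean_metric_def ble_def bjoin_def by blast

lemma tri_eq:
  assumes bm: "boolean_metric X d" and X: "x \<in> X" "y \<in> X" "w \<in> X"
    and A: "A * d x y = 0"
  shows "A * d x w = A * d y w"
proof -
  have 1: "d x w * (d x y + d y w + d x y * d y w) = d x w" using bm_tri[OF bm X] .
  have 2: "d y w * (d y x + d x w + d y x * d x w) = d y w" using bm_tri[OF bm X(2,1,3)] .
  have s: "d y x = d x y" using bm_sym[OF bm X(2,1)] .
  have "A * d x w = A * (d x w * (d x y + d y w + d x y * d y w))" using 1 by simp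
  also have "\<dots> = d x w * (A * d x y) + A * d x w * d y w + d x w * (A * d x y) * d y w"
    by (simp add: algebra_simps)
  finally have a: "A * d x w = A * d x w * d y w" using A by simp
  have "A * d y w = A * (d y w * (d x y + d x w + d x y * d x w))" using 2 s by simp
  also have "\<dots> = d y w * (A * d x y) + A * d y w * d x w + d y w * (A * d x y) * d x w"
    by (simp add: algebra_simps)
  finally have b: "A * d y w = A * d y w * d x w" using A by simp
  from a b show ?thesis by (simp add: ac_simps)
qed

lemma tri0:
  assumes bm: "boolean_metric X d" and X: "x \<in> X" "y \<in> X" "w \<in> X"
    and A: "A * d x y = 0" "A * d y w = 0"
  shows "A * d x w = 0"
  using tri_eq[OF bm X A(1)] A(2) by simp

lemma PH:
  assumes bm: "boolean_metric X d" and fV: "finite V"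
  shows "V \<subseteq> X \<Longrightarrow> finite W \<Longrightarrow> W \<subseteq> X \<Longrightarrow> card V < card W \<Longrightarrow>
    (\<forall>w\<in>W. g * prod (d w) V = 0) \<Longrightarrow> (\<forall>w\<in>W. \<forall>w'\<in>W. w \<noteq> w' \<longrightarrow> g * d w w' = g) \<Longrightarrow> g = 0"
  using fV
proof (induction V arbitrary: g W rule: finite_induct)
  case empty
  then obtain w where "w \<in> W" by fastforce
  with empty show ?case by auto
next
  case (insert v V)
  have vX: "v \<in> X" and VX: "V \<subseteq> X" using insert.prems by auto
  have P: "\<And>w. w \<in> W \<Longrightarrow> prod (d w) (insert v V) = d w v * prod (d w) V"
    using insert.hyps by simp
  have step1: "g * (1 + d w v) = 0" if wW: "w \<in> W" for w
  proof -
    define h where "h = g * (1 + d w v)"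
    have wX: "w \<in> X" using wW insert.prems by auto
    have "card (W - {w}) = card W - 1" using wW insert.prems by simp
    hence cW: "card V < card (W - {w})" using insert.prems insert.hyps by simp
    have pw: "h * prod (d w') V = 0" if w'W: "w' \<in> W - {w}" for w'
    proof -
      have w'X: "w' \<in> X" using w'W insert.prems by auto
      define A where "A = (1 + d w v) * (1 + d w' v)"
      have "A * d w v = (d w v + d w v * d w v) * (1 + d w' v)"
        unfolding A_def by (simp add: algebra_simps)
      hence A1: "A * d w v = 0" by (simp add: mult_idem_br)
      have "A * d w w' = A * d v w'" by (rule tri_eq[OF bm wX vX w'X A1])
      also have "\<dots> = A * d w' v" using bm_sym[OF bm vX w'X] by simp
      also have "\<dots> = (1 + d w v) * (d w' v + d w' v * d w' v)" unfolding A_def by (simp add: algebra_simps)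
      also have "\<dots> = 0" by (simp add: mult_idem_br)
      finally have A2: "A * d w w' = 0" .
      have sep: "g * d w w' = g" using insert.prems wW w'W by auto
      have h1: "h * (1 + d w' v) = 0"
      proof -
        have "h * (1 + d w' v) = g * d w w' * A" unfolding h_def A_def using sep by (simp add: ac_simps)
        also have "\<dots> = g * (A * d w w')" by (simp add: ac_simps)
        also have "\<dots> = 0" using A2 by simp
        finally show ?thesis .
      qed
      have "h * prod (d w') V = h * d w' v * prod (d w') V + h * (1 + d w' v) * prod (d w') V"
        by (simp add: algebra_simps)
      also have "\<dots> = (1 + d w v) * (g * prod (d w') (insert v V))"
        using h1 P[of w'] w'W unfolding h_def by (simp add: ac_simps)
      also have "\<dots> = 0" using insert.prems w'W by simp
      finally show ?thesis .
    qed
    have sp: "\<forall>a\<in>W - {w}. \<forall>b\<in>W - {w}. a \<noteq> b \<longrightarrow> h * d a b = h"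
      using insert.prems unfolding h_def by (metis DiffD1 mult.assoc mult.commute)
    have "h = 0" using insert.IH[of "W - {w}" h] VX insert.prems cW pw sp by auto
    thus ?thesis unfolding h_def .
  qed
  have gw: "g = g * d w v" if "w \<in> W" for w using br_compl0[OF step1[OF that]] .
  have pw: "\<forall>w\<in>W. g * prod (d w) V = 0"
  proof
    fix w assume wW: "w \<in> W"
    have "g * prod (d w) V = g * d w v * prod (d w) V" using gw[OF wW] by simp
    also have "\<dots> = g * prod (d w) (insert v V)" using P[OF wW] by (simp add: ac_simps)
    also have "\<dots> = 0" using insert.prems wW by simp
    finally show "g * prod (d w) V = 0" .
  qed
  have "card V < card W" using insert.prems insert.hyps by simp
  thus ?case using insert.IH[of W g] VX insert.prems pw by auto
qed

lemma base_distinct: "is_base X d z xs \<Longrightarrow> distinct xs"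
  unfolding is_base_def by blast
lemma base_subset: "is_base X d z xs \<Longrightarrow> set xs \<subseteq> X"
  unfolding is_base_def referential_def by blast
lemma base_z: "is_base X d z xs \<Longrightarrow> z \<notin> set xs"
  unfolding is_base_def referential_def orthogonal_set_def by blast
lemma base_orth: "is_base X d z xs \<Longrightarrow> i < length xs \<Longrightarrow> j < length xs \<Longrightarrow> i \<noteq> j \<Longrightarrow>
   d (xs!i) (xs!j) = bjoin (d z (xs!i)) (d z (xs!j))"
  unfolding is_base_def referential_def orthogonal_set_def orthogonal_def
  by (metis nth_eq_iff_index_eq nth_mem)
lemma base_ref: "is_base X d z xs \<Longrightarrow> x \<in> X \<Longrightarrow>
   \<exists>N p c. (\<forall>j<N. p j \<in> set xs \<union> {z}) \<and> is_conv_comb d x N p c"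
  unfolding is_base_def referential_def by blast
lemma base_mono: "is_base X d z xs \<Longrightarrow> i \<le> j \<Longrightarrow> j < length xs \<Longrightarrow>
   d z (xs!j) * d z (xs!i) = d z (xs!j)"
proof -
  assume b: "is_base X d z xs" and ij: "i \<le> j" "j < length xs"
  show ?thesis
  proof (cases "i = j")
    case True thus ?thesis by (simp add: mult_idem_br)
  next
    case False
    with ij have "i < j" by simp
    with b ij show ?thesis unfolding is_base_def ble_def sorted_wrt_iff_nth_less by blast
  qed
qed
lemma base_nz: "boolean_metric X d \<Longrightarrow> z \<in> X \<Longrightarrow> is_base X d z xs \<Longrightarrow> i < length xs \<Longrightarrow>
   d z (xs!i) \<noteq> 0"
  using bm_zero base_subset base_z nth_mem by (metis subsetD)

lemma CMP:
  assumes bm: "boolean_metric X d" and zX: "z \<in> X" and z'X: "z' \<in> X"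
    and bx: "is_base X d z xs" and bY: "is_base X d z' ys" and k: "k < length ys"
  shows "d z' (ys!k) * (1 + (if k < length xs then d z (xs!k) else 0)) = 0"
proof -
  define A where "A = (if k < length xs then d z (xs!k) else 0)"
  define g where "g = d z' (ys!k) * (1 + A)"
  define V where "V = insert z (nth xs ` {i. i < k \<and> i < length xs})"
  define W where "W = insert z' (nth ys ` {..k})"
  have fV: "finite V" unfolding V_def by simp
  have VX: "V \<subseteq> X" unfolding V_def using zX base_subset[OF bx] by auto
  have fW: "finite W" unfolding W_def by simp
  have WX: "W \<subseteq> X" unfolding W_def using z'X base_subset[OF bY] k by auto
  have "card V \<le> Suc (card (nth xs ` {i. i < k \<and> i < length xs}))"
    unfolding V_def by (rule card_insert_le_m1) simp_all
  also have "card (nth xs ` {i. i < k \<and> i < length xs}) \<le> card {i. i < k \<and> i < length xs}"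
    by (rule card_image_le) simp
  also have "card {i. i < k \<and> i < length xs} \<le> card {..<k}" by (rule card_mono) auto
  finally have cV: "card V \<le> Suc k" by simp
  have "card W = Suc (card (nth ys ` {..k}))"
    unfolding W_def using base_z[OF bY] k by (subst card_insert_disjoint) auto
  also have "card (nth ys ` {..k}) = Suc k"
    using base_distinct[OF bY] k by (subst card_image) (auto intro!: inj_on_nth)
  finally have cW: "card W = Suc (Suc k)" .
  have pw: "\<forall>w\<in>W. g * prod (d w) V = 0"
  proof
    fix w assume wW: "w \<in> W"
    hence wX: "w \<in> X" using WX by auto
    obtain N p c where pc: "\<forall>j<N. p j \<in> set xs \<union> {z}" and cc: "is_conv_comb d w N p c"
      using base_ref[OF bx wX] by blast
    have s1: "(\<Sum>j<N. c j) = 1" and c0: "\<And>j. j < N \<Longrightarrow> c j * d w (p j) = 0"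
      using cc unfolding is_conv_comb_def disjoint_sum_one_def by auto
    have "g * prod (d w) V = (\<Sum>j<N. c j) * (g * prod (d w) V)" using s1 by simp
    also have "\<dots> = (\<Sum>j<N. c j * (g * prod (d w) V))" by (simp add: sum_distrib_right)
    also have "\<dots> = 0"
    proof (rule sum.neutral, rule ballI)
      fix j assume "j \<in> {..<N}"
      hence jN: "j < N" by simp
      show "c j * (g * prod (d w) V) = 0"
      proof (cases "p j \<in> V")
        case True
        have "prod (d w) V = d w (p j) * prod (d w) (V - {p j})"
          by (rule prod.remove[OF fV True])
        hence "c j * (g * prod (d w) V) = g * (c j * d w (p j)) * prod (d w) (V - {p j})"
          by (simp add: ac_simps)
        thus ?thesis using c0[OF jN] by simp
      next
        case False
        hence "p j \<in> set xs" using pc jN unfolding V_def by auto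
        then obtain i where i: "i < length xs" "p j = xs ! i" by (auto simp: in_set_conv_nth)
        with False have ki: "k \<le> i" unfolding V_def by auto
        hence kn: "k < length xs" using i by simp
        have mono: "d z (xs!i) * d z (xs!k) = d z (xs!i)" by (rule base_mono[OF bx ki i(1)])
        have "g * d z (xs!i) = d z' (ys!k) * (d z (xs!i) + d z (xs!i) * d z (xs!k))"
          unfolding g_def A_def using kn by (simp add: algebra_simps)
        also have "\<dots> = 0" using mono by simp
        finally have gi: "g * d z (xs!i) = 0" .
        have pX: "p j \<in> X" using i base_subset[OF bx] by auto
        have e1: "(c j * g) * d w (p j) = 0" using c0[OF jN] by (simp add: ac_simps)
        have e2: "(c j * g) * d (p j) z = 0"
        proof -
          have "(c j * g) * d (p j) z = c j * (g * d z (xs!i))"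
            using i bm_sym[OF bm pX zX] by (simp add: ac_simps)
          thus ?thesis using gi by simp
        qed
        have e3: "(c j * g) * d w z = 0" by (rule tri0[OF bm wX pX zX e1 e2])
        have "prod (d w) V = d w z * prod (d w) (V - {z})"
          by (rule prod.remove[OF fV]) (simp add: V_def)
        hence "c j * (g * prod (d w) V) = ((c j * g) * d w z) * prod (d w) (V - {z})"
          by (simp add: ac_simps)
        thus ?thesis using e3 by simp
      qed
    qed
    finally show "g * prod (d w) V = 0" .
  qed
  have sepb: "d z' (ys!k) * d w w' = d z' (ys!k)" if ww: "w \<in> W" "w' \<in> W" "w \<noteq> w'" for w w'
  proof -
    have B1: "d z' (ys!k) * d z' (ys!j) = d z' (ys!k)" if "j \<le> k" for j
      using base_mono[OF bY that k] .
    have ysX: "\<And>j. j \<le> k \<Longrightarrow> ys!j \<in> X" using base_subset[OF bY] k by auto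
    consider "w = z'" "\<exists>j\<le>k. w' = ys!j" | "w' = z'" "\<exists>j\<le>k. w = ys!j"
      | "\<exists>i\<le>k. \<exists>j\<le>k. w = ys!i \<and> w' = ys!j \<and> i \<noteq> j"
      using ww unfolding W_def by auto
    thus ?thesis
    proof cases
      case 1 thus ?thesis using B1 by auto
    next
      case 2 thus ?thesis using B1 bm_sym[OF bm _ z'X] ysX by metis
    next
      case 3
      then obtain i j where ij: "i \<le> k" "j \<le> k" "w = ys!i" "w' = ys!j" "i \<noteq> j" by blast
      hence "d w w' = bjoin (d z' (ys!i)) (d z' (ys!j))" using base_orth[OF bY] k by simp
      hence "d z' (ys!k) * d w w' = d z' (ys!k) * d z' (ys!i) + d z' (ys!k) * d z' (ys!j)
          + d z' (ys!k) * d z' (ys!j) * d z' (ys!i)"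
        unfolding bjoin_def by (simp add: algebra_simps)
      also have "\<dots> = d z' (ys!k) * d z' (ys!i) + d z' (ys!k) + d z' (ys!k) * d z' (ys!i)"
        using B1[OF ij(2)] by simp
      also have "\<dots> = d z' (ys!k)" by (metis add.commute add.left_commute br_add_self add_0)
      finally show ?thesis .
    qed
  qed
  have sep: "\<forall>w\<in>W. \<forall>w'\<in>W. w \<noteq> w' \<longrightarrow> g * d w w' = g"
    unfolding g_def using sepb by (metis mult.assoc mult.commute)
  have "g = 0" using PH[OF bm fV VX fW WX] cV cW pw sep by simp
  thus ?thesis unfolding g_def A_def .
qed

lemma local_eq:
  assumes "disjoint_sum_one N c" "disjoint_sum_one N' c'"
    and h: "\<forall>j<N. \<forall>l<N'. c j * c' l * u = c j * c' l * v"
  shows "u = (v::'b::boolean_ring)"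
proof -
  have s: "(\<Sum>j<N. c j) = 1" "(\<Sum>l<N'. c' l) = 1" using assms(1,2) unfolding disjoint_sum_one_def by auto
  have e: "\<And>w. w = (\<Sum>j<N. \<Sum>l<N'. c j * c' l * w)"
  proof -
    fix w :: 'b
    have "w = (\<Sum>j<N. c j) * (\<Sum>l<N'. c' l) * w" using s by simp
    also have "\<dots> = (\<Sum>j<N. \<Sum>l<N'. c j * c' l * w)"
      by (simp add: sum_distrib_left sum_distrib_right) (rule sum.swap)
    finally show "w = (\<Sum>j<N. \<Sum>l<N'. c j * c' l * w)" .
  qed
  have "(\<Sum>j<N. \<Sum>l<N'. c j * c' l * u) = (\<Sum>j<N. \<Sum>l<N'. c j * c' l * v)"
    using h by (intro sum.cong refl) auto
  thus ?thesis using e[of u] e[of v] by simp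
qed

lemma loc:
  assumes bm: "boolean_metric X d" and X: "x \<in> X" "x' \<in> X" "p \<in> X" "p' \<in> X"
    and A: "A * d x p = 0" "A * d x' p' = 0"
  shows "A * d x x' = A * d p p'"
proof -
  have "A * d x x' = A * d p x'" by (rule tri_eq[OF bm X(1,3,2) A(1)])
  also have "\<dots> = A * d x' p" using bm_sym[OF bm X(3,2)] by simp
  also have "\<dots> = A * d p' p" by (rule tri_eq[OF bm X(2,4,3) A(2)])
  also have "\<dots> = A * d p p'" using bm_sym[OF bm X(4,3)] by simp
  finally show ?thesis .
qed

lemma KEY:
  assumes bm: "boolean_metric X d" and X: "x \<in> X" "x' \<in> X" "y \<in> X" "y' \<in> X"
    and pX: "\<forall>j<N. p j \<in> X \<and> q j \<in> X" and p'X: "\<forall>l<N'. p' l \<in> X \<and> q' l \<in> X"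
    and cx: "is_conv_comb d x N p c" and cx': "is_conv_comb d x' N' p' c'"
    and cy: "is_conv_comb d y N q c" and cy': "is_conv_comb d y' N' q' c'"
    and D: "\<forall>j<N. \<forall>l<N'. d (q j) (q' l) = d (p j) (p' l)"
  shows "d y y' = d x x'"
proof (rule local_eq)
  show "disjoint_sum_one N c" "disjoint_sum_one N' c'" using cx cx' unfolding is_conv_comb_def by auto
  show "\<forall>j<N. \<forall>l<N'. c j * c' l * d y y' = c j * c' l * d x x'"
  proof (intro allI impI)
    fix j l assume j: "j < N" and l: "l < N'"
    have a1: "c j * c' l * d x (p j) = 0" using cx j unfolding is_conv_comb_def
      by (metis mult.assoc mult.commute mult_zero_left)
    have a2: "c j * c' l * d x' (p' l) = 0" using cx' l unfolding is_conv_comb_def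
      by (metis mult.assoc mult_zero_right)
    have a3: "c j * c' l * d y (q j) = 0" using cy j unfolding is_conv_comb_def
      by (metis mult.assoc mult.commute mult_zero_left)
    have a4: "c j * c' l * d y' (q' l) = 0" using cy' l unfolding is_conv_comb_def
      by (metis mult.assoc mult_zero_right)
    have "c j * c' l * d y y' = c j * c' l * d (q j) (q' l)"
      using loc[OF bm X(3,4) _ _ a3 a4] pX p'X j l by auto
    also have "\<dots> = c j * c' l * d (p j) (p' l)" using D j l by simp
    also have "\<dots> = c j * c' l * d x x'"
      using loc[OF bm X(1,2) _ _ a1 a2] pX p'X j l by auto
    finally show "c j * c' l * d y y' = c j * c' l * d x x'" .
  qed
qed

definition the_idx :: "'a list \<Rightarrow> 'a \<Rightarrow> nat" where
  "the_idx L q = (THE t. t < length L \<and> L!t = q)"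

lemma idx_nth: "distinct L \<Longrightarrow> t < length L \<Longrightarrow> the_idx L (L!t) = t"
  unfolding the_idx_def by (rule the_equality) (auto simp: nth_eq_iff_index_eq)

lemma idx_mem: "distinct L \<Longrightarrow> q \<in> set L \<Longrightarrow> the_idx L q < length L \<and> L ! (the_idx L q) = q"
  by (metis idx_nth in_set_conv_nth)

lemma DP:
  assumes bm: "boolean_metric X d" and zX: "z \<in> X" and z'X: "z' \<in> X"
    and bx: "is_base X d z xs" and bY: "is_base X d z' ys" and len: "length xs = length ys"
    and eq: "\<forall>i<length xs. d z (xs!i) = d z' (ys!i)"
    and s: "s < Suc (length xs)" and t: "t < Suc (length xs)"
  shows "d ((z'#ys)!s) ((z'#ys)!t) = d ((z#xs)!s) ((z#xs)!t)"
proof -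
  have xX: "\<And>i. i < length xs \<Longrightarrow> xs!i \<in> X" using base_subset[OF bx] by auto
  have yX: "\<And>i. i < length xs \<Longrightarrow> ys!i \<in> X" using base_subset[OF bY] len by auto
  show ?thesis
  proof (cases "s = t")
    case True
    have "(z#xs)!s \<in> X" "(z'#ys)!s \<in> X" using s xX yX zX z'X by (cases s; simp)+
    thus ?thesis using True bm_zero[OF bm] by metis
  next
    case False
    show ?thesis
    proof (cases s)
      case 0
      then obtain t' where t': "t = Suc t'" using False by (cases t) auto
      thus ?thesis using 0 eq t by simp
    next
      case (Suc s')
      show ?thesis
      proof (cases t)
        case 0
        thus ?thesis using Suc eq s bm_sym[OF bm] xX yX zX z'X len by simp
      next
        case (Suc t')
        have "s' \<noteq> t'" using False Suc \<open>s = Suc s'\<close> by simp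
        thus ?thesis using Suc \<open>s = Suc s'\<close> s t base_orth[OF bx] base_orth[OF bY] eq len by simp
      qed
    qed
  qed
qed

lemma iso_exists:
  assumes bm: "boolean_metric X d" and cv: "convex_bms X d" and zX: "z \<in> X" and z'X: "z' \<in> X"
    and bx: "is_base X d z xs" and bY: "is_base X d z' ys" and len: "length xs = length ys"
    and eq: "\<forall>i<length xs. d z (xs!i) = d z' (ys!i)"
  shows "\<exists>f. isometry_on X d f \<and> f z = z' \<and> (\<forall>i<length xs. f (xs ! i) = ys ! i)"
proof -
  define zs where "zs = z # xs"
  define zs' where "zs' = z' # ys"
  have dzs: "distinct zs" unfolding zs_def using base_distinct[OF bx] base_z[OF bx] by simp
  have dzs': "distinct zs'" unfolding zs'_def using base_distinct[OF bY] base_z[OF bY] by simp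
  have lzs: "length zs' = length zs" unfolding zs_def zs'_def using len by simp
  have zsX: "set zs \<subseteq> X" unfolding zs_def using zX base_subset[OF bx] by simp
  have zs'X: "set zs' \<subseteq> X" unfolding zs'_def using z'X base_subset[OF bY] by simp
  define \<phi> where "\<phi> q = zs' ! the_idx zs q" for q
  define \<psi> where "\<psi> q = zs ! the_idx zs' q" for q
  have phi_set: "\<phi> q \<in> set zs'" if "q \<in> set zs" for q
    unfolding \<phi>_def using idx_mem[OF dzs that] lzs by simp
  have psi_set: "\<psi> q \<in> set zs" if "q \<in> set zs'" for q
    unfolding \<psi>_def using idx_mem[OF dzs' that] lzs by simp
  have phi_psi: "\<phi> (\<psi> q) = q" if "q \<in> set zs'" for q
    unfolding \<phi>_def \<psi>_def using idx_mem[OF dzs' that] lzs idx_nth[OF dzs] by simp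
  have phi_pres: "d (\<phi> q) (\<phi> q') = d q q'" if "q \<in> set zs" "q' \<in> set zs" for q q'
  proof -
    have a: "the_idx zs q < Suc (length xs)" "the_idx zs q' < Suc (length xs)"
      using idx_mem[OF dzs that(1)] idx_mem[OF dzs that(2)] unfolding zs_def by auto
    have "d (\<phi> q) (\<phi> q') = d (zs ! the_idx zs q) (zs ! the_idx zs q')"
      using DP[OF bm zX z'X bx bY len eq a] by (simp add: \<phi>_def zs_def zs'_def)
    thus ?thesis using idx_mem[OF dzs that(1)] idx_mem[OF dzs that(2)] by simp
  qed
  define P where "P x y = (\<exists>N p c. (\<forall>j<N. p j \<in> set zs) \<and> is_conv_comb d x N p c
        \<and> is_conv_comb d y N (\<phi> \<circ> p) c)" for x y
  define F where "F x = (SOME y. y \<in> X \<and> P x y)" for x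
  have Fspec: "F x \<in> X \<and> P x (F x)" if xX: "x \<in> X" for x
  proof -
    obtain N p c where pc: "\<forall>j<N. p j \<in> set xs \<union> {z}" and cc: "is_conv_comb d x N p c"
      using base_ref[OF bx xX] by blast
    have pz: "\<forall>j<N. p j \<in> set zs" using pc unfolding zs_def by auto
    have "\<forall>j<N. (\<phi> \<circ> p) j \<in> X" using pz phi_set zs'X by auto
    moreover have "disjoint_sum_one N c" using cc unfolding is_conv_comb_def by simp
    ultimately obtain y where "y \<in> X" "is_conv_comb d y N (\<phi> \<circ> p) c"
      using cv unfolding convex_bms_def by blast
    hence "\<exists>y. y \<in> X \<and> P x y" unfolding P_def using pz cc by blast
    thus ?thesis unfolding F_def by (rule someI_ex)
  qed
  have one: "is_conv_comb d q 1 (\<lambda>_. q) (\<lambda>_. 1)" if "q \<in> X" for q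
    using that bm_zero[OF bm] unfolding is_conv_comb_def disjoint_sum_one_def by simp
  have iso: "d (F x) (F x') = d x x'" if xx: "x \<in> X" "x' \<in> X" for x x'
  proof -
    obtain N p c where A: "\<forall>j<N. p j \<in> set zs" "is_conv_comb d x N p c" "is_conv_comb d (F x) N (\<phi> \<circ> p) c"
      using Fspec[OF xx(1)] unfolding P_def by blast
    obtain N' p' c' where B: "\<forall>j<N'. p' j \<in> set zs" "is_conv_comb d x' N' p' c'" "is_conv_comb d (F x') N' (\<phi> \<circ> p') c'"
      using Fspec[OF xx(2)] unfolding P_def by blast
    show ?thesis
    proof (rule KEY[OF bm xx _ _ _ _ A(2) B(2) A(3) B(3)])
      show "F x \<in> X" "F x' \<in> X" using Fspec xx by auto
      show "\<forall>j<N. p j \<in> X \<and> (\<phi> \<circ> p) j \<in> X" using A(1) zsX zs'X phi_set by auto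
      show "\<forall>j<N'. p' j \<in> X \<and> (\<phi> \<circ> p') j \<in> X" using B(1) zsX zs'X phi_set by auto
      show "\<forall>j<N. \<forall>l<N'. d ((\<phi> \<circ> p) j) ((\<phi> \<circ> p') l) = d (p j) (p' l)"
        using A(1) B(1) phi_pres by simp
    qed
  qed
  have Fq: "F q = \<phi> q" if qz: "q \<in> set zs" for q
  proof -
    have qX: "q \<in> X" using qz zsX by auto
    have pqX: "\<phi> q \<in> X" using phi_set[OF qz] zs'X by auto
    obtain N p c where A: "\<forall>j<N. p j \<in> set zs" "is_conv_comb d q N p c" "is_conv_comb d (F q) N (\<phi> \<circ> p) c"
      using Fspec[OF qX] unfolding P_def by blast
    have "d (F q) (\<phi> q) = d q q"
    proof (rule KEY[OF bm qX qX _ pqX _ _ A(2) one[OF qX] A(3) one[OF pqX]])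
      show "F q \<in> X" using Fspec qX by auto
      show "\<forall>j<N. p j \<in> X \<and> (\<phi> \<circ> p) j \<in> X" using A(1) zsX zs'X phi_set by auto
      show "\<forall>j<1. q \<in> X \<and> \<phi> q \<in> X" using qX pqX by simp
      show "\<forall>j<N. \<forall>l<1. d ((\<phi> \<circ> p) j) (\<phi> q) = d (p j) q"
        using A(1) phi_pres qz by simp
    qed
    moreover have "d q q = 0" using bm_zero[OF bm qX qX] by simp
    ultimately show ?thesis using bm_zero[OF bm] pqX Fspec[OF qX] by metis
  qed
  have inj: "inj_on F X"
  proof (rule inj_onI)
    fix x x' assume "x \<in> X" "x' \<in> X" "F x = F x'"
    thus "x = x'" using iso[of x x'] bm_zero[OF bm] Fspec by metis
  qed
  have surj: "F ` X = X"
  proof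
    show "F ` X \<subseteq> X" using Fspec by auto
    show "X \<subseteq> F ` X"
    proof
      fix y assume yX: "y \<in> X"
      obtain N p' c where pc: "\<forall>j<N. p' j \<in> set ys \<union> {z'}" and cc: "is_conv_comb d y N p' c"
        using base_ref[OF bY yX] by blast
      have pz: "\<forall>j<N. p' j \<in> set zs'" using pc unfolding zs'_def by auto
      have "\<forall>j<N. (\<psi> \<circ> p') j \<in> X" using pz psi_set zsX by auto
      moreover have "disjoint_sum_one N c" using cc unfolding is_conv_comb_def by simp
      ultimately obtain x where xX: "x \<in> X" and cx: "is_conv_comb d x N (\<psi> \<circ> p') c"
        using cv unfolding convex_bms_def by blast
      obtain N2 p2 c2 where A: "\<forall>j<N2. p2 j \<in> set zs" "is_conv_comb d x N2 p2 c2" "is_conv_comb d (F x) N2 (\<phi> \<circ> p2) c2"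
        using Fspec[OF xX] unfolding P_def by blast
      have FxX: "F x \<in> X" using Fspec xX by auto
      have "d (F x) y = d x x"
      proof (rule KEY[OF bm xX xX FxX yX _ _ A(2) cx A(3) cc])
        show "\<forall>j<N2. p2 j \<in> X \<and> (\<phi> \<circ> p2) j \<in> X" using A(1) zsX zs'X phi_set by auto
        show "\<forall>j<N. (\<psi> \<circ> p') j \<in> X \<and> p' j \<in> X" using pz psi_set zsX zs'X by auto
        show "\<forall>j<N2. \<forall>l<N. d ((\<phi> \<circ> p2) j) (p' l) = d (p2 j) ((\<psi> \<circ> p') l)"
        proof (intro allI impI)
          fix j l assume j: "j < N2" and l: "l < N"
          have "d ((\<phi> \<circ> p2) j) (p' l) = d (\<phi> (p2 j)) (\<phi> (\<psi> (p' l)))"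
            using phi_psi pz l by simp
          also have "\<dots> = d (p2 j) (\<psi> (p' l))" using phi_pres A(1) j psi_set pz l by simp
          finally show "d ((\<phi> \<circ> p2) j) (p' l) = d (p2 j) ((\<psi> \<circ> p') l)" by simp
        qed
      qed
      moreover have "d x x = 0" using bm_zero[OF bm xX xX] by simp
      ultimately have "F x = y" using bm_zero[OF bm FxX yX] by simp
      thus "y \<in> F ` X" using xX by blast
    qed
  qed
  have "isometry_on X d F" unfolding isometry_on_def bij_betw_def using inj surj iso by blast
  moreover have "F z = z'" using Fq[of z] idx_nth[OF dzs, of 0] unfolding \<phi>_def zs_def zs'_def by simp
  moreover have "\<forall>i<length xs. F (xs ! i) = ys ! i"
  proof (intro allI impI)
    fix i assume i: "i < length xs"
    have "xs ! i = zs ! Suc i" unfolding zs_def by simp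
    moreover have "Suc i < length zs" using i unfolding zs_def by simp
    ultimately show "F (xs ! i) = ys ! i"
      using Fq[of "zs ! Suc i"] idx_nth[OF dzs, of "Suc i"] unfolding \<phi>_def
      by (simp add: zs'_def)
  qed
  ultimately show ?thesis by blast
qed

theorem mainTheorem5:
  fixes X :: "'a set" and d :: "'a \<Rightarrow> 'a \<Rightarrow> 'b::boolean_ring"
    and z z' :: 'a and xs ys :: "'a list"
  assumes "boolean_metric X d" and "convex_bms X d"
    and "z \<in> X" and "z' \<in> X"
    and "is_base X d z xs" and "is_base X d z' ys"
  shows "length xs = length ys \<and>
         (\<forall>i<length xs. d z (xs ! i) = d z' (ys ! i)) \<and>
         (\<exists>f. isometry_on X d f \<and> f z = z' \<and> (\<forall>i<length xs. f (xs ! i) = ys ! i))"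
proof -
  note bm = assms(1) and cv = assms(2) and zX = assms(3) and z'X = assms(4)
    and bx = assms(5) and bY = assms(6)
  have le1: "length ys \<le> length xs"
  proof (rule ccontr)
    assume "\<not> ?thesis"
    hence k: "length xs < length ys" by simp
    have "d z' (ys ! length xs) = 0" using CMP[OF bm zX z'X bx bY k] by simp
    thus False using base_nz[OF bm z'X bY k] by simp
  qed
  have le2: "length xs \<le> length ys"
  proof (rule ccontr)
    assume "\<not> ?thesis"
    hence k: "length ys < length xs" by simp
    have "d z (xs ! length ys) = 0" using CMP[OF bm z'X zX bY bx k] by simp
    thus False using base_nz[OF bm zX bx k] by simp
  qed
  have len: "length xs = length ys" using le1 le2 by simp
  have eq: "\<forall>i<length xs. d z (xs ! i) = d z' (ys ! i)"
  proof (intro allI impI)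
    fix i assume i: "i < length xs"
    have "d z' (ys!i) = d z' (ys!i) * d z (xs!i)"
      using br_compl0 CMP[OF bm zX z'X bx bY, of i] i len by simp
    moreover have "d z (xs!i) = d z (xs!i) * d z' (ys!i)"
      using br_compl0 CMP[OF bm z'X zX bY bx, of i] i len by simp
    ultimately show "d z (xs ! i) = d z' (ys ! i)" by (simp add: mult.commute)
  qed
  show ?thesis using len eq iso_exists[OF bm cv zX z'X bx bY len eq] by blast
qed

end
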